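(* Let $\mu>0$ and let $X\sim\mathcal N(0,\sigma_X^2)$, $Y\sim\mathcal N(0,\sigma_Y^2)$ be independent with $\sigma_X^2+\sigma_Y^2>0$. Then $$\mathbb E\Big[\Big(1-\tanh^2\Big(\frac{X+Y}{\mu}\Big)\Big)X^2\mathbf 1_{\{X+Y>0\}}\Big]\le\frac1{\sqrt{2\pi}}\frac{\mu\sigma_X^2\sigma_Y^2}{(\sigma_X^2+\sigma_Y^2)^{3/2}}+\frac3{4\sqrt{2\pi}}\frac{\sigma_X^2\mu^3}{(\sigma_X^2+\sigma_Y^2)^{5/2}}(3\mu^2+4\sigma_X^2).$$ *)

theory Defs
  imports "HOL-Probability.Probability"
begin

definition centered_gaussian :: "real \<Rightarrow> real measure" where
  "centered_gaussian s =
     (if s = 0 then return lborel 0 else density lborel (normal_density 0 s))"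

end

theory Submission
  imports Defs "HOL-Real_Asymp.Real_Asymp"
begin

lemma tanh_meas[measurable]: "(tanh :: real \<Rightarrow> real) \<in> borel_measurable borel"
  by (intro borel_measurable_continuous_onI continuous_on_tanh continuous_on_id) (auto simp: cosh_real_pos[THEN less_imp_neq, symmetric] cosh_real_pos)

lemma int_sech:
  assumes mu: "(\<mu>::real) > 0"
  shows "(\<integral>\<^sup>+s. ennreal (1 - (tanh (s/\<mu>))\<^sup>2) * indicator {0..} s \<partial>lborel) = ennreal \<mu>"
proof -
  have "(\<integral>\<^sup>+s. ennreal (1 - (tanh (s/\<mu>))\<^sup>2) * indicator {0..} s \<partial>lborel) = \<mu> - \<mu> * tanh (0/\<mu>)"
  proof (rule nn_integral_FTC_atLeast)
    show "(\<lambda>s. 1 - (tanh (s / \<mu>))\<^sup>2) \<in> borel_measurable borel" by measurable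
    fix x :: real
    show "((\<lambda>s. \<mu> * tanh (s/\<mu>)) has_real_derivative 1 - (tanh (x / \<mu>))\<^sup>2) (at x)"
      using mu by (auto intro!: derivative_eq_intros simp: cosh_real_pos[THEN less_imp_neq, symmetric])
    have "\<bar>tanh (x/\<mu>)\<bar> < 1" using tanh_real_bounds[of "x/\<mu>"] by auto
    then show "0 \<le> 1 - (tanh (x / \<mu>))\<^sup>2" by (simp add: abs_square_less_1 less_imp_le)
  next
    show "((\<lambda>s. \<mu> * tanh (s / \<mu>)) \<longlongrightarrow> \<mu>) at_top"
      using mu by real_asymp
  qed
  then show ?thesis by simp
qed

lemma int_sq_exp:
  assumes mu: "(\<mu>::real) > 0"
  shows "(\<integral>\<^sup>+s. ennreal (4 * s\<^sup>2 * exp (- 2 * s / \<mu>)) * indicator {0..} s \<partial>lborel) = ennreal (\<mu>^3)"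
proof -
  have "(\<integral>\<^sup>+s. ennreal (4 * s\<^sup>2 * exp (- 2 * s / \<mu>)) * indicator {0..} s \<partial>lborel)
      = 0 - (- exp (- 2 * 0 / \<mu>) * (2 * \<mu> * 0\<^sup>2 + 2 * \<mu>\<^sup>2 * 0 + \<mu> ^ 3))"
  proof (rule nn_integral_FTC_atLeast)
    show "(\<lambda>s. 4 * s\<^sup>2 * exp (- 2 * s / \<mu>)) \<in> borel_measurable borel" by measurable
    fix x :: real
    show "((\<lambda>s. - exp (- 2 * s / \<mu>) * (2 * \<mu> * s\<^sup>2 + 2 * \<mu>\<^sup>2 * s + \<mu> ^ 3)) has_real_derivative 4 * x\<^sup>2 * exp (- 2 * x / \<mu>)) (at x)"
      using mu by (auto intro!: derivative_eq_intros simp: field_simps power2_eq_square power3_eq_cube)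
    show "0 \<le> 4 * x\<^sup>2 * exp (- 2 * x / \<mu>)" by simp
  next
    show "((\<lambda>s. - exp (- 2 * s / \<mu>) * (2 * \<mu> * s\<^sup>2 + 2 * \<mu>\<^sup>2 * s + \<mu> ^ 3)) \<longlongrightarrow> 0) at_top"
      using mu by real_asymp
  qed
  then show ?thesis by simp
qed

lemma sech_bound:
  assumes "(t::real) \<ge> 0"
  shows "1 - (tanh t)\<^sup>2 \<le> 4 * exp (- 2 * t)"
proof -
  have c: "cosh t > 0" by (rule cosh_real_pos)
  have "1 - (tanh t)\<^sup>2 = 1 / (cosh t)\<^sup>2"
  proof -
    have e: "1 + (sinh t)\<^sup>2 \<noteq> 0" by (smt (verit) zero_le_power2)
    show ?thesis using c cosh_square_eq[of t] e by (simp add: tanh_def power_divide field_simps)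
  qed
  also have "cosh t \<ge> exp t / 2" unfolding cosh_def by simp
  hence "(cosh t)\<^sup>2 \<ge> (exp t / 2)\<^sup>2" by (intro power_mono) auto
  hence "1 / (cosh t)\<^sup>2 \<le> 1 / (exp t / 2)\<^sup>2" by (intro divide_left_mono) auto
  also have "1 / (exp t / 2)\<^sup>2 = 4 * exp (- 2 * t)"
    by (simp add: power2_eq_square field_simps exp_minus flip: exp_add)
  finally show ?thesis .
qed

lemma nd_le:
  assumes sig: "(\<sigma>::real) > 0"
  shows "normal_density 0 \<sigma> s \<le> 1 / (\<sigma> * sqrt (2 * pi))"
proof -
  have "sqrt (2 * pi * \<sigma>\<^sup>2) = \<sigma> * sqrt (2 * pi)"
    using sig by (simp add: real_sqrt_mult)
  moreover have "exp (- (s - 0)\<^sup>2 / (2 * \<sigma>\<^sup>2)) \<le> 1" by simp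
  moreover have "1 / (\<sigma> * sqrt (2 * pi)) \<ge> 0" using sig by simp
  ultimately show ?thesis unfolding normal_density_def
    by (metis mult_left_le) 
qed

lemma main_1d:
  assumes mu: "(\<mu>::real) > 0" and sig: "\<sigma> > 0" and c1: "c1 \<ge> 0" and c2: "c2 \<ge> 0"
  shows "(\<integral>\<^sup>+s. ennreal ((1 - (tanh (s/\<mu>))\<^sup>2) * indicator {0<..} s * (c1 + c2 * s\<^sup>2) * normal_density 0 \<sigma> s) \<partial>lborel)
     \<le> ennreal ((c1 * \<mu> + c2 * \<mu> ^ 3) / (\<sigma> * sqrt (2 * pi)))"
proof -
  define K where "K = 1 / (\<sigma> * sqrt (2 * pi))"
  have K: "K \<ge> 0" unfolding K_def using sig by simp
  have "(\<integral>\<^sup>+s. ennreal ((1 - (tanh (s/\<mu>))\<^sup>2) * indicator {0<..} s * (c1 + c2 * s\<^sup>2) * normal_density 0 \<sigma> s) \<partial>lborel)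
     \<le> (\<integral>\<^sup>+s. ennreal K * (ennreal c1 * (ennreal (1 - (tanh (s/\<mu>))\<^sup>2) * indicator {0..} s)
          + ennreal c2 * (ennreal (4 * s\<^sup>2 * exp (- 2 * s / \<mu>)) * indicator {0..} s)) \<partial>lborel)"
  proof (rule nn_integral_mono)
    fix s :: real
    show "ennreal ((1 - (tanh (s/\<mu>))\<^sup>2) * indicator {0<..} s * (c1 + c2 * s\<^sup>2) * normal_density 0 \<sigma> s)
        \<le> ennreal K * (ennreal c1 * (ennreal (1 - (tanh (s/\<mu>))\<^sup>2) * indicator {0..} s)
          + ennreal c2 * (ennreal (4 * s\<^sup>2 * exp (- 2 * s / \<mu>)) * indicator {0..} s))"
    proof (cases "s > 0")
      case False
      then show ?thesis by simp
    next
      case True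
      have t1: "0 \<le> 1 - (tanh (s/\<mu>))\<^sup>2"
      proof -
        have "\<bar>tanh (s/\<mu>)\<bar> < 1" using tanh_real_bounds[of "s/\<mu>"] by auto
        then show ?thesis by (simp add: abs_square_less_1 less_imp_le)
      qed
      have sb: "1 - (tanh (s/\<mu>))\<^sup>2 \<le> 4 * exp (- 2 * s / \<mu>)"
        using sech_bound[of "s/\<mu>"] True mu by simp
      have nd: "normal_density 0 \<sigma> s \<le> K" unfolding K_def by (rule nd_le[OF sig])
      have "(1 - (tanh (s/\<mu>))\<^sup>2) * (c1 + c2 * s\<^sup>2) * normal_density 0 \<sigma> s
          \<le> (1 - (tanh (s/\<mu>))\<^sup>2) * (c1 + c2 * s\<^sup>2) * K"
        by (intro mult_left_mono nd mult_nonneg_nonneg t1) (use c1 c2 in auto)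
      also have "\<dots> = K * (c1 * (1 - (tanh (s/\<mu>))\<^sup>2) + c2 * (s\<^sup>2 * (1 - (tanh (s/\<mu>))\<^sup>2)))"
        by (simp add: algebra_simps)
      also have "\<dots> \<le> K * (c1 * (1 - (tanh (s/\<mu>))\<^sup>2) + c2 * (s\<^sup>2 * (4 * exp (- 2 * s / \<mu>))))"
        by (intro mult_left_mono add_left_mono sb K c2) simp_all
      finally have le: "(1 - (tanh (s/\<mu>))\<^sup>2) * (c1 + c2 * s\<^sup>2) * normal_density 0 \<sigma> s
          \<le> K * (c1 * (1 - (tanh (s/\<mu>))\<^sup>2) + c2 * (4 * s\<^sup>2 * exp (- 2 * s / \<mu>)))"
        by (simp add: algebra_simps)
      have "ennreal K * (ennreal c1 * (ennreal (1 - (tanh (s/\<mu>))\<^sup>2) * indicator {0..} s)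
          + ennreal c2 * (ennreal (4 * s\<^sup>2 * exp (- 2 * s / \<mu>)) * indicator {0..} s))
          = ennreal (K * (c1 * (1 - (tanh (s/\<mu>))\<^sup>2) + c2 * (4 * s\<^sup>2 * exp (- 2 * s / \<mu>))))"
        using True K c1 c2 t1 by (simp add: ennreal_mult mult_nonneg_nonneg)
      then show ?thesis using True le by (simp add: ennreal_leI)
    qed
  qed
  also have "\<dots> = ennreal K * (ennreal c1 * ennreal \<mu> + ennreal c2 * ennreal (\<mu> ^ 3))"
    by (simp add: nn_integral_cmult nn_integral_add int_sech[OF mu] int_sq_exp[OF mu, simplified])
  also have "\<dots> = ennreal ((c1 * \<mu> + c2 * \<mu> ^ 3) / (\<sigma> * sqrt (2 * pi)))"
  proof -
    have "(c1 * \<mu> + c2 * \<mu> ^ 3) / (\<sigma> * sqrt (2 * pi)) = K * (c1 * \<mu> + c2 * \<mu> ^ 3)"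
      unfolding K_def by simp
    then show ?thesis using K c1 c2 mu by (simp add: ennreal_mult mult_nonneg_nonneg)
  qed
  finally show ?thesis .
qed

lemma second_moment:
  assumes sig: "(\<sigma>::real) > 0"
  shows "(\<integral>\<^sup>+x. ennreal (normal_density m \<sigma> x * x\<^sup>2) \<partial>lborel) = ennreal (\<sigma>\<^sup>2 + m\<^sup>2)"
proof -
  have h1: "has_bochner_integral lborel (\<lambda>x. normal_density m \<sigma> x * (x - m) ^ (2 * 1)) (\<sigma>\<^sup>2)"
    using normal_moment_even[OF sig, of m 1] by simp
  have h2: "has_bochner_integral lborel (\<lambda>x. 2 * m * (normal_density m \<sigma> x * x)) (2 * m * m)"
    by (intro has_bochner_integral_mult_right normal_moment_nz_1[OF sig])
  have h3: "has_bochner_integral lborel (\<lambda>x. m\<^sup>2 * normal_density m \<sigma> x) (m\<^sup>2 * 1)"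
  proof -
    have h0: "has_bochner_integral lborel (normal_density m \<sigma>) 1" using integrable_normal_density[OF sig] integral_normal_density[OF sig] by (simp add: has_bochner_integral_iff)
    show ?thesis using has_bochner_integral_mult_right[OF h0, of "m\<^sup>2"] by simp
  qed
  have "has_bochner_integral lborel (\<lambda>x. normal_density m \<sigma> x * (x - m) ^ (2 * 1) + 2 * m * (normal_density m \<sigma> x * x) - m\<^sup>2 * normal_density m \<sigma> x) (\<sigma>\<^sup>2 + 2 * m * m - m\<^sup>2 * 1)"
    by (intro has_bochner_integral_add has_bochner_integral_diff h1 h2 h3)
  moreover have "(\<lambda>x. normal_density m \<sigma> x * (x - m) ^ (2 * 1) + 2 * m * (normal_density m \<sigma> x * x) - m\<^sup>2 * normal_density m \<sigma> x)
      = (\<lambda>x. normal_density m \<sigma> x * x\<^sup>2)"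
    by (rule ext) (simp add: power2_eq_square algebra_simps)
  ultimately have hb: "has_bochner_integral lborel (\<lambda>x. normal_density m \<sigma> x * x\<^sup>2) (\<sigma>\<^sup>2 + m\<^sup>2)"
    by (simp add: power2_eq_square add.commute)
  have "(\<integral>\<^sup>+x. ennreal (normal_density m \<sigma> x * x\<^sup>2) \<partial>lborel) = ennreal (integral\<^sup>L lborel (\<lambda>x. normal_density m \<sigma> x * x\<^sup>2))"
    using hb by (intro nn_integral_eq_integral) (auto simp: has_bochner_integral_iff)
  then show ?thesis using hb by (simp add: has_bochner_integral_iff)
qed

lemma aux_frac:
  fixes N q P :: real
  assumes "q > 0" "P > 0"
  shows "(N / q)\<^sup>2 / (2 * (P / q)) = N\<^sup>2 / (2 * q * P)"
  using assms by (simp add: power2_eq_square field_simps)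

lemma gauss_identity:
  assumes sX: "(sX::real) > 0" and sY: "sY > 0"
  defines "\<sigma> \<equiv> sqrt (sX\<^sup>2 + sY\<^sup>2)"
  defines "a \<equiv> sX\<^sup>2 / (sX\<^sup>2 + sY\<^sup>2)"
  defines "sd \<equiv> sX * sY / sqrt (sX\<^sup>2 + sY\<^sup>2)"
  shows "normal_density 0 sX x * normal_density 0 sY (s - x) = normal_density 0 \<sigma> s * normal_density (a * s) sd x"
proof -
  define q where "q = sX\<^sup>2 + sY\<^sup>2"
  have q: "q > 0" unfolding q_def using sX sY by (simp add: add_pos_pos)
  have sq: "\<sigma>\<^sup>2 = q" "sd\<^sup>2 = sX\<^sup>2 * sY\<^sup>2 / q" unfolding \<sigma>_def sd_def q_def
    using q[unfolded q_def] by (simp_all add: power_mult_distrib power_divide)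
  have sX2: "sX\<^sup>2 > 0" "sY\<^sup>2 > 0" using sX sY by auto
  have key: "q * (sY\<^sup>2 * x\<^sup>2 + sX\<^sup>2 * (s - x)\<^sup>2) = s\<^sup>2 * sX\<^sup>2 * sY\<^sup>2 + (q * x - sX\<^sup>2 * s)\<^sup>2"
    unfolding q_def by (simp add: power2_eq_square algebra_simps)
  have l: "- (x - 0)\<^sup>2 / (2 * sX\<^sup>2) + - (s - x - 0)\<^sup>2 / (2 * sY\<^sup>2) = - (sY\<^sup>2 * x\<^sup>2 + sX\<^sup>2 * (s - x)\<^sup>2) / (2 * sX\<^sup>2 * sY\<^sup>2)"
    using sX2 by (simp add: field_simps)
  have xa: "x - a * s = (q * x - sX\<^sup>2 * s) / q" unfolding a_def q_def[symmetric] using q by (simp add: field_simps)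
  have r1: "(x - a * s)\<^sup>2 / (2 * sd\<^sup>2) = (q * x - sX\<^sup>2 * s)\<^sup>2 / (2 * q * sX\<^sup>2 * sY\<^sup>2)"
    unfolding sq xa using sX2 q aux_frac[of q "sX\<^sup>2 * sY\<^sup>2" "q * x - sX\<^sup>2 * s"] by (simp add: mult.assoc)
  have r2: "(s - 0)\<^sup>2 / (2 * \<sigma>\<^sup>2) = s\<^sup>2 * sX\<^sup>2 * sY\<^sup>2 / (2 * q * sX\<^sup>2 * sY\<^sup>2)"
    unfolding sq using sX2 q by (simp add: field_simps)
  have r: "- (s - 0)\<^sup>2 / (2 * \<sigma>\<^sup>2) + - (x - a * s)\<^sup>2 / (2 * sd\<^sup>2)
      = - (s\<^sup>2 * sX\<^sup>2 * sY\<^sup>2 + (q * x - sX\<^sup>2 * s)\<^sup>2) / (2 * q * sX\<^sup>2 * sY\<^sup>2)"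
    unfolding minus_divide_left[symmetric] r1 r2 by (simp add: add_divide_distrib)
  have e: "- (x - 0)\<^sup>2 / (2 * sX\<^sup>2) + - (s - x - 0)\<^sup>2 / (2 * sY\<^sup>2)
      = - (s - 0)\<^sup>2 / (2 * \<sigma>\<^sup>2) + - (x - a * s)\<^sup>2 / (2 * sd\<^sup>2)"
    unfolding l r key[symmetric] using q sX2 by (simp add: field_simps)
  have c: "sqrt (2 * pi * sX\<^sup>2) * sqrt (2 * pi * sY\<^sup>2) = sqrt (2 * pi * \<sigma>\<^sup>2) * sqrt (2 * pi * sd\<^sup>2)"
    unfolding sq using q by (simp add: real_sqrt_mult[symmetric] field_simps)
  show ?thesis unfolding normal_density_def
    using c e by (simp add: exp_add[symmetric] field_simps)
qed

lemma sech_nonneg: "0 \<le> 1 - (tanh (t::real))\<^sup>2"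
proof -
  have "\<bar>tanh t\<bar> < 1" using tanh_real_bounds[of t] by auto
  then show ?thesis by (simp add: abs_square_less_1 less_imp_le)
qed

definition FF :: "real \<Rightarrow> real \<Rightarrow> real \<Rightarrow> real" where
  "FF \<mu> x y = (1 - (tanh ((x + y) / \<mu>))\<^sup>2) * x\<^sup>2 * indicator {0<..} (x + y)"

lemma FF_nonneg: "0 \<le> FF \<mu> x y"
  unfolding FF_def using sech_nonneg by (simp add: indicator_def)

lemma FF_meas[measurable]: "(\<lambda>z. FF \<mu> (fst z) (snd z)) \<in> borel_measurable (borel \<Otimes>\<^sub>M borel)"
  unfolding FF_def by measurable

lemma FF_meas3[measurable]: "(\<lambda>x. FF \<mu> x y) \<in> borel_measurable borel"
  unfolding FF_def by measurable

lemma FF_meas2[measurable]: "FF \<mu> x \<in> borel_measurable borel"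
  unfolding FF_def by measurable

lemma two_dim:
  assumes mu: "(\<mu>::real) > 0" and sX: "sX > 0" and sY: "sY > 0"
  defines "\<sigma> \<equiv> sqrt (sX\<^sup>2 + sY\<^sup>2)"
  defines "a \<equiv> sX\<^sup>2 / (sX\<^sup>2 + sY\<^sup>2)"
  defines "sd \<equiv> sX * sY / sqrt (sX\<^sup>2 + sY\<^sup>2)"
  shows "(\<integral>\<^sup>+x. ennreal (normal_density 0 sX x) * (\<integral>\<^sup>+y. ennreal (normal_density 0 sY y) * ennreal (FF \<mu> x y) \<partial>lborel) \<partial>lborel)
    \<le> ennreal ((sd\<^sup>2 * \<mu> + a\<^sup>2 * \<mu> ^ 3) / (\<sigma> * sqrt (2 * pi)))"
proof -
  have sig: "\<sigma> > 0" unfolding \<sigma>_def using sX sY by (simp add: add_pos_pos)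
  have sdp: "sd > 0" unfolding sd_def using sX sY by (simp add: add_pos_pos)
  have step1: "ennreal (normal_density 0 sX x) * (\<integral>\<^sup>+y. ennreal (normal_density 0 sY y) * ennreal (FF \<mu> x y) \<partial>lborel)
      = (\<integral>\<^sup>+s. ennreal (normal_density 0 sX x * normal_density 0 sY (s - x) * ((1 - (tanh (s / \<mu>))\<^sup>2) * x\<^sup>2 * indicator {0<..} s)) \<partial>lborel)" for x
  proof -
    have "ennreal (normal_density 0 sX x) * (\<integral>\<^sup>+y. ennreal (normal_density 0 sY y) * ennreal (FF \<mu> x y) \<partial>lborel)
      = (\<integral>\<^sup>+y. ennreal (normal_density 0 sX x * normal_density 0 sY y * FF \<mu> x y) \<partial>lborel)"
      by (subst nn_integral_cmult[symmetric]) (auto simp: ennreal_mult FF_nonneg mult.assoc intro!: nn_integral_cong)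
    also have "\<dots> = (\<integral>\<^sup>+s. ennreal (normal_density 0 sX x * normal_density 0 sY (s - x) * ((1 - (tanh (s / \<mu>))\<^sup>2) * x\<^sup>2 * indicator {0<..} s)) \<partial>lborel)"
      using nn_integral_real_affine[of "\<lambda>y. ennreal (normal_density 0 sX x * normal_density 0 sY y * FF \<mu> x y)" 1 "- x"]
      by (simp add: FF_def)
    finally show ?thesis .
  qed
  have step2: "(\<integral>\<^sup>+x. \<integral>\<^sup>+s. ennreal (normal_density 0 sX x * normal_density 0 sY (s - x) * ((1 - (tanh (s / \<mu>))\<^sup>2) * x\<^sup>2 * indicator {0<..} s)) \<partial>lborel \<partial>lborel)
     = (\<integral>\<^sup>+s. \<integral>\<^sup>+x. ennreal (normal_density 0 sX x * normal_density 0 sY (s - x) * ((1 - (tanh (s / \<mu>))\<^sup>2) * x\<^sup>2 * indicator {0<..} s)) \<partial>lborel \<partial>lborel)"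
    by (rule lborel_pair.Fubini'[symmetric]) (simp add: case_prod_unfold)
  have step3: "(\<integral>\<^sup>+x. ennreal (normal_density 0 sX x * normal_density 0 sY (s - x) * ((1 - (tanh (s / \<mu>))\<^sup>2) * x\<^sup>2 * indicator {0<..} s)) \<partial>lborel)
      = ennreal ((1 - (tanh (s/\<mu>))\<^sup>2) * indicator {0<..} s * (sd\<^sup>2 + a\<^sup>2 * s\<^sup>2) * normal_density 0 \<sigma> s)" for s
  proof -
    define C where "C = (1 - (tanh (s / \<mu>))\<^sup>2) * indicator {0<..} s * normal_density 0 \<sigma> s"
    have C: "C \<ge> 0" unfolding C_def using sech_nonneg by (simp add: indicator_def)
    have "(\<integral>\<^sup>+x. ennreal (normal_density 0 sX x * normal_density 0 sY (s - x) * ((1 - (tanh (s / \<mu>))\<^sup>2) * x\<^sup>2 * indicator {0<..} s)) \<partial>lborel)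
       = (\<integral>\<^sup>+x. ennreal C * ennreal (normal_density (a * s) sd x * x\<^sup>2) \<partial>lborel)"
      using C by (intro nn_integral_cong)
        (simp add: gauss_identity[OF sX sY] \<sigma>_def a_def sd_def C_def ennreal_mult[symmetric] mult_ac)
    also have "\<dots> = ennreal C * ennreal (sd\<^sup>2 + (a * s)\<^sup>2)"
      by (simp add: nn_integral_cmult second_moment[OF sdp])
    also have "\<dots> = ennreal (C * (sd\<^sup>2 + (a * s)\<^sup>2))"
      by (rule ennreal_mult[OF C, symmetric]) simp
    also have "\<dots> = ennreal ((1 - (tanh (s/\<mu>))\<^sup>2) * indicator {0<..} s * (sd\<^sup>2 + a\<^sup>2 * s\<^sup>2) * normal_density 0 \<sigma> s)"
      by (rule arg_cong[where f=ennreal]) (simp add: C_def power_mult_distrib algebra_simps)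
    finally show ?thesis .
  qed
  have "(\<integral>\<^sup>+x. ennreal (normal_density 0 sX x) * (\<integral>\<^sup>+y. ennreal (normal_density 0 sY y) * ennreal (FF \<mu> x y) \<partial>lborel) \<partial>lborel)
      = (\<integral>\<^sup>+s. ennreal ((1 - (tanh (s/\<mu>))\<^sup>2) * indicator {0<..} s * (sd\<^sup>2 + a\<^sup>2 * s\<^sup>2) * normal_density 0 \<sigma> s) \<partial>lborel)"
    by (simp only: step1 step2 step3)
  also have "\<dots> \<le> ennreal ((sd\<^sup>2 * \<mu> + a\<^sup>2 * \<mu> ^ 3) / (\<sigma> * sqrt (2 * pi)))"
    by (rule main_1d[OF mu sig]) auto
  finally show ?thesis .
qed

lemma final_ineq:
  assumes mu: "(\<mu>::real) > 0" and sX: "sX > 0" and sY: "sY \<ge> 0"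
  defines "\<sigma> \<equiv> sqrt (sX\<^sup>2 + sY\<^sup>2)"
  defines "a \<equiv> sX\<^sup>2 / (sX\<^sup>2 + sY\<^sup>2)"
  defines "sd \<equiv> sX * sY / sqrt (sX\<^sup>2 + sY\<^sup>2)"
  shows "(sd\<^sup>2 * \<mu> + a\<^sup>2 * \<mu> ^ 3) / (\<sigma> * sqrt (2 * pi))
    \<le> 1 / sqrt (2 * pi) * (\<mu> * sX\<^sup>2 * sY\<^sup>2 / (sX\<^sup>2 + sY\<^sup>2) powr (3/2))
           + 3 / (4 * sqrt (2 * pi)) * (sX\<^sup>2 * \<mu> ^ 3 / (sX\<^sup>2 + sY\<^sup>2) powr (5/2))
             * (3 * \<mu>\<^sup>2 + 4 * sX\<^sup>2)"
proof -
  define q where "q = sX\<^sup>2 + sY\<^sup>2"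
  have q: "q > 0" unfolding q_def using sX by (simp add: add_pos_nonneg)
  have p3: "q powr (3/2) = q * sqrt q"
  proof -
    have "q powr (3/2) = q powr (1 + 1/2)" by simp
    also have "\<dots> = q powr 1 * q powr (1/2)" by (rule powr_add)
    finally show ?thesis using q by (simp add: powr_half_sqrt)
  qed
  have p5: "q powr (5/2) = q\<^sup>2 * sqrt q"
  proof -
    have "q powr (5/2) = q powr (2 + 1/2)" by simp
    also have "\<dots> = q powr 2 * q powr (1/2)" by (rule powr_add)
    finally show ?thesis using q by (simp add: powr_half_sqrt powr_numeral)
  qed
  define T where "T = 1 / sqrt (2 * pi)"
  have T: "T > 0" unfolding T_def by simp
  define A where "A = \<mu> * sX\<^sup>2 * sY\<^sup>2 / (q * sqrt q)"
  have sq: "(sqrt q)\<^sup>2 = q" using q by simp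
  have L: "(sd\<^sup>2 * \<mu> + a\<^sup>2 * \<mu> ^ 3) / (\<sigma> * sqrt (2 * pi)) = T * A + T * (sX^4 * \<mu> ^ 3 / (q\<^sup>2 * sqrt q))"
    unfolding sd_def a_def \<sigma>_def q_def[symmetric] T_def A_def using q sq
    by (simp add: power_divide power_mult_distrib field_simps power2_eq_square power4_eq_xxxx)
  have R: "1 / sqrt (2 * pi) * (\<mu> * sX\<^sup>2 * sY\<^sup>2 / (sX\<^sup>2 + sY\<^sup>2) powr (3/2))
           + 3 / (4 * sqrt (2 * pi)) * (sX\<^sup>2 * \<mu> ^ 3 / (sX\<^sup>2 + sY\<^sup>2) powr (5/2))
             * (3 * \<mu>\<^sup>2 + 4 * sX\<^sup>2) = T * A + T * (3/4 * sX\<^sup>2 * \<mu> ^ 3 * (3 * \<mu>\<^sup>2 + 4 * sX\<^sup>2) / (q\<^sup>2 * sqrt q))"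
    unfolding q_def[symmetric] p3 p5 T_def A_def by (simp add: field_simps)
  have "sX^4 * \<mu> ^ 3 \<le> 3/4 * sX\<^sup>2 * \<mu> ^ 3 * (3 * \<mu>\<^sup>2 + 4 * sX\<^sup>2)"
  proof -
    have "sX^4 * \<mu> ^ 3 = sX\<^sup>2 * \<mu> ^ 3 * sX\<^sup>2" by (simp add: power2_eq_square power4_eq_xxxx)
    also have "\<dots> \<le> sX\<^sup>2 * \<mu> ^ 3 * (3/4 * (3 * \<mu>\<^sup>2 + 4 * sX\<^sup>2))"
      using mu by (intro mult_left_mono) auto
    finally show ?thesis by (simp add: algebra_simps)
  qed
  then have "sX^4 * \<mu> ^ 3 / (q\<^sup>2 * sqrt q) \<le> 3/4 * sX\<^sup>2 * \<mu> ^ 3 * (3 * \<mu>\<^sup>2 + 4 * sX\<^sup>2) / (q\<^sup>2 * sqrt q)"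
    using q by (intro divide_right_mono) auto
  then show ?thesis unfolding L R using T by (intro add_left_mono mult_left_mono) auto
qed

lemma cg_sets[measurable_cong]: "sets (centered_gaussian s) = sets borel"
  by (simp add: centered_gaussian_def)

lemma cg_prob: "s \<ge> 0 \<Longrightarrow> prob_space (centered_gaussian s)"
  unfolding centered_gaussian_def by (auto intro!: prob_space_normal_density prob_space_return)

lemma G_meas:
  assumes "s \<ge> 0"
  shows "(\<lambda>x. \<integral>\<^sup>+y. ennreal (FF \<mu> x y) \<partial>centered_gaussian s) \<in> borel_measurable borel"
proof -
  interpret sigma_finite_measure "centered_gaussian s"
    by (rule prob_space_imp_sigma_finite[OF cg_prob]) fact
  have "(\<lambda>z. ennreal (FF \<mu> (fst z) (snd z))) \<in> borel_measurable (borel \<Otimes>\<^sub>M borel)" by measurable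
  then have "(\<lambda>z. ennreal (FF \<mu> (fst z) (snd z))) \<in> borel_measurable (borel \<Otimes>\<^sub>M centered_gaussian s)"
    by (subst measurable_cong_sets[OF sets_pair_measure_cong[OF refl cg_sets] refl])
  from borel_measurable_nn_integral_fst[OF this] show ?thesis by simp
qed

lemma key:
  assumes mu: "(\<mu>::real) > 0" and sX: "sX \<ge> 0" and sY: "sY \<ge> 0" and pos: "sX\<^sup>2 + sY\<^sup>2 > 0"
  shows "(\<integral>\<^sup>+x. (\<integral>\<^sup>+y. ennreal (FF \<mu> x y) \<partial>centered_gaussian sY) \<partial>centered_gaussian sX)
    \<le> ennreal (1 / sqrt (2 * pi) * (\<mu> * sX\<^sup>2 * sY\<^sup>2 / (sX\<^sup>2 + sY\<^sup>2) powr (3/2))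
           + 3 / (4 * sqrt (2 * pi)) * (sX\<^sup>2 * \<mu> ^ 3 / (sX\<^sup>2 + sY\<^sup>2) powr (5/2))
             * (3 * \<mu>\<^sup>2 + 4 * sX\<^sup>2))"
proof (cases "sX = 0")
  case True
  have "(\<integral>\<^sup>+x. (\<integral>\<^sup>+y. ennreal (FF \<mu> x y) \<partial>centered_gaussian sY) \<partial>centered_gaussian sX)
      = (\<integral>\<^sup>+y. ennreal (FF \<mu> 0 y) \<partial>centered_gaussian sY)"
    using True G_meas[where \<mu>=\<mu> and s=sY, OF sY] by (simp add: centered_gaussian_def[of 0] nn_integral_return)
  also have "\<dots> = 0" by (simp add: FF_def)
  finally show ?thesis by simp
next
  case False
  then have sXp: "sX > 0" using sX by simp
  have dX: "centered_gaussian sX = density lborel (normal_density 0 sX)"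
    using False by (simp add: centered_gaussian_def)
  show ?thesis
  proof (cases "sY = 0")
    case True
    have "(\<integral>\<^sup>+x. (\<integral>\<^sup>+y. ennreal (FF \<mu> x y) \<partial>centered_gaussian sY) \<partial>centered_gaussian sX)
        = (\<integral>\<^sup>+x. ennreal (FF \<mu> x 0) \<partial>centered_gaussian sX)"
      using True by (simp add: centered_gaussian_def[of 0] nn_integral_return)
    also have "\<dots> = (\<integral>\<^sup>+x. ennreal (normal_density 0 sX x) * ennreal (FF \<mu> x 0) \<partial>lborel)"
      unfolding dX by (rule nn_integral_density) auto
    also have "\<dots> = (\<integral>\<^sup>+x. ennreal ((1 - (tanh (x/\<mu>))\<^sup>2) * indicator {0<..} x * (0 + 1 * x\<^sup>2) * normal_density 0 sX x) \<partial>lborel)"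
    proof (intro nn_integral_cong)
      fix x :: real
      have "ennreal (normal_density 0 sX x) * ennreal (FF \<mu> x 0) = ennreal (normal_density 0 sX x * FF \<mu> x 0)"
        using FF_nonneg[of \<mu> x 0] by (simp add: ennreal_mult)
      then show "ennreal (normal_density 0 sX x) * ennreal (FF \<mu> x 0) = ennreal ((1 - (tanh (x/\<mu>))\<^sup>2) * indicator {0<..} x * (0 + 1 * x\<^sup>2) * normal_density 0 sX x)"
        by (simp add: FF_def mult_ac)
    qed
    also have "\<dots> \<le> ennreal ((0 * \<mu> + 1 * \<mu> ^ 3) / (sX * sqrt (2 * pi)))"
      by (rule main_1d[OF mu sXp]) auto
    also have "\<dots> \<le> ennreal (1 / sqrt (2 * pi) * (\<mu> * sX\<^sup>2 * sY\<^sup>2 / (sX\<^sup>2 + sY\<^sup>2) powr (3/2))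
           + 3 / (4 * sqrt (2 * pi)) * (sX\<^sup>2 * \<mu> ^ 3 / (sX\<^sup>2 + sY\<^sup>2) powr (5/2))
             * (3 * \<mu>\<^sup>2 + 4 * sX\<^sup>2))"
      using final_ineq[OF mu sXp sY] True sXp by (intro ennreal_leI) (simp add: power2_eq_square)
    finally show ?thesis .
  next
    case False
    then have sYp: "sY > 0" using sY by simp
    have dY: "centered_gaussian sY = density lborel (normal_density 0 sY)"
      using False by (simp add: centered_gaussian_def)
    have inner: "(\<integral>\<^sup>+y. ennreal (FF \<mu> x y) \<partial>centered_gaussian sY)
        = (\<integral>\<^sup>+y. ennreal (normal_density 0 sY y) * ennreal (FF \<mu> x y) \<partial>lborel)" for x
      unfolding dY by (rule nn_integral_density) auto
    have "(\<integral>\<^sup>+x. (\<integral>\<^sup>+y. ennreal (FF \<mu> x y) \<partial>centered_gaussian sY) \<partial>centered_gaussian sX)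
        = (\<integral>\<^sup>+x. ennreal (normal_density 0 sX x) * (\<integral>\<^sup>+y. ennreal (FF \<mu> x y) \<partial>centered_gaussian sY) \<partial>lborel)"
      unfolding dX using G_meas[where \<mu>=\<mu> and s=sY, OF sY] by (intro nn_integral_density) auto
    also have "\<dots> = (\<integral>\<^sup>+x. ennreal (normal_density 0 sX x) * (\<integral>\<^sup>+y. ennreal (normal_density 0 sY y) * ennreal (FF \<mu> x y) \<partial>lborel) \<partial>lborel)"
      by (simp only: inner)
    also have "\<dots> \<le> ennreal (((sX * sY / sqrt (sX\<^sup>2 + sY\<^sup>2))\<^sup>2 * \<mu> + (sX\<^sup>2 / (sX\<^sup>2 + sY\<^sup>2))\<^sup>2 * \<mu> ^ 3) / (sqrt (sX\<^sup>2 + sY\<^sup>2) * sqrt (2 * pi)))"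
      by (rule two_dim[OF mu sXp sYp])
    also have "\<dots> \<le> ennreal (1 / sqrt (2 * pi) * (\<mu> * sX\<^sup>2 * sY\<^sup>2 / (sX\<^sup>2 + sY\<^sup>2) powr (3/2))
           + 3 / (4 * sqrt (2 * pi)) * (sX\<^sup>2 * \<mu> ^ 3 / (sX\<^sup>2 + sY\<^sup>2) powr (5/2))
             * (3 * \<mu>\<^sup>2 + 4 * sX\<^sup>2))"
      using final_ineq[OF mu sXp sY] by (intro ennreal_leI) simp
    finally show ?thesis .
  qed
qed

lemma distr_borel_lborel: "distr M borel f = distr M lborel f"
  by (simp add: distr_def)

theorem mainTheorem17:
  fixes M :: "'a measure" and X Y :: "'a \<Rightarrow> real" and \<mu> sX sY :: real
  assumes "prob_space M"
    and "\<mu> > 0"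
    and "sX \<ge> 0" and "sY \<ge> 0" and "sX\<^sup>2 + sY\<^sup>2 > 0"
    and "X \<in> borel_measurable M" and "Y \<in> borel_measurable M"
    and "prob_space.indep_var M borel X borel Y"
    and "distr M lborel X = centered_gaussian sX"
    and "distr M lborel Y = centered_gaussian sY"
  shows "prob_space.expectation M
           (\<lambda>\<omega>. (1 - (tanh ((X \<omega> + Y \<omega>) / \<mu>))\<^sup>2) * (X \<omega>)\<^sup>2
                 * indicator {0<..} (X \<omega> + Y \<omega>))
         \<le> 1 / sqrt (2 * pi) * (\<mu> * sX\<^sup>2 * sY\<^sup>2 / (sX\<^sup>2 + sY\<^sup>2) powr (3/2))
           + 3 / (4 * sqrt (2 * pi)) * (sX\<^sup>2 * \<mu> ^ 3 / (sX\<^sup>2 + sY\<^sup>2) powr (5/2))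
             * (3 * \<mu>\<^sup>2 + 4 * sX\<^sup>2)"
proof -
  interpret P: prob_space M by fact
  note mX = assms(6) and mY = assms(7)
  define R where "R = 1 / sqrt (2 * pi) * (\<mu> * sX\<^sup>2 * sY\<^sup>2 / (sX\<^sup>2 + sY\<^sup>2) powr (3/2))
           + 3 / (4 * sqrt (2 * pi)) * (sX\<^sup>2 * \<mu> ^ 3 / (sX\<^sup>2 + sY\<^sup>2) powr (5/2))
             * (3 * \<mu>\<^sup>2 + 4 * sX\<^sup>2)"
  have R: "R \<ge> 0" unfolding R_def using assms(2) by (intro add_nonneg_nonneg mult_nonneg_nonneg divide_nonneg_nonneg) auto
  have dX: "distr M borel X = centered_gaussian sX" using assms(9) by (simp add: distr_borel_lborel)
  have dY: "distr M borel Y = centered_gaussian sY" using assms(10) by (simp add: distr_borel_lborel)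
  have joint: "distr M (borel \<Otimes>\<^sub>M borel) (\<lambda>\<omega>. (X \<omega>, Y \<omega>)) = centered_gaussian sX \<Otimes>\<^sub>M centered_gaussian sY"
    using assms(8) unfolding P.indep_var_distribution_eq dX dY by simp
  have eqf: "(\<lambda>\<omega>. (1 - (tanh ((X \<omega> + Y \<omega>) / \<mu>))\<^sup>2) * (X \<omega>)\<^sup>2 * indicator {0<..} (X \<omega> + Y \<omega>))
      = (\<lambda>\<omega>. FF \<mu> (X \<omega>) (Y \<omega>))" by (simp add: FF_def fun_eq_iff)
  have mP: "(\<lambda>\<omega>. (X \<omega>, Y \<omega>)) \<in> measurable M (borel \<Otimes>\<^sub>M borel)"
    using mX mY by (rule measurable_Pair)
  have mF: "(\<lambda>\<omega>. FF \<mu> (X \<omega>) (Y \<omega>)) \<in> borel_measurable M"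
    using measurable_compose[OF mP FF_meas[of \<mu>]] by simp
  interpret SY: sigma_finite_measure "centered_gaussian sY"
    by (rule prob_space_imp_sigma_finite[OF cg_prob]) (rule assms(4))
  have mF2: "(\<lambda>z. ennreal (FF \<mu> (fst z) (snd z))) \<in> borel_measurable (centered_gaussian sX \<Otimes>\<^sub>M centered_gaussian sY)"
  proof -
    have "(\<lambda>z. ennreal (FF \<mu> (fst z) (snd z))) \<in> borel_measurable (borel \<Otimes>\<^sub>M borel)" by measurable
    then show ?thesis
      by (subst measurable_cong_sets[OF sets_pair_measure_cong[OF cg_sets cg_sets] refl])
  qed
  have "(\<integral>\<^sup>+\<omega>. ennreal (FF \<mu> (X \<omega>) (Y \<omega>)) \<partial>M)
      = (\<integral>\<^sup>+z. ennreal (FF \<mu> (fst z) (snd z)) \<partial>distr M (borel \<Otimes>\<^sub>M borel) (\<lambda>\<omega>. (X \<omega>, Y \<omega>)))"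
    by (subst nn_integral_distr[OF mP]) auto
  also have "\<dots> = (\<integral>\<^sup>+z. ennreal (FF \<mu> (fst z) (snd z)) \<partial>(centered_gaussian sX \<Otimes>\<^sub>M centered_gaussian sY))"
    by (simp only: joint)
  also have "\<dots> = (\<integral>\<^sup>+x. (\<integral>\<^sup>+y. ennreal (FF \<mu> x y) \<partial>centered_gaussian sY) \<partial>centered_gaussian sX)"
    using SY.nn_integral_fst[OF mF2] by simp
  also have "\<dots> \<le> ennreal R"
    unfolding R_def by (rule key[OF assms(2-5)])
  finally have nn: "(\<integral>\<^sup>+\<omega>. ennreal (FF \<mu> (X \<omega>) (Y \<omega>)) \<partial>M) \<le> ennreal R" .
  have "P.expectation (\<lambda>\<omega>. FF \<mu> (X \<omega>) (Y \<omega>)) = enn2real (\<integral>\<^sup>+\<omega>. ennreal (FF \<mu> (X \<omega>) (Y \<omega>)) \<partial>M)"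
    by (rule integral_eq_nn_integral[OF mF]) (simp add: FF_nonneg)
  also have "\<dots> \<le> enn2real (ennreal R)"
    by (rule enn2real_mono[OF nn]) simp
  also have "\<dots> = R" using R by simp
  finally show ?thesis unfolding eqf R_def .
qed

end
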